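(* Let $\ell$ be a prime and let $G^1$ be a Hasse subgroup of $\mathrm{Sp}_4(\mathbb{F}_\ell)$. Then the center $Z(G^1)$ is contained in $\{\pm\mathrm{Id}\}$.
   Context: $\mathrm{Sp}_4(\mathbb{F}_\ell)$ is the isometry group of a non-degenerate alternating bilinear form on $\mathbb{F}_\ell^4$. A subgroup of $\mathrm{GL}_n(\mathbb{F}_\ell)$ is Hasse if it acts irreducibly on $\mathbb{F}_\ell^n$ and each of its elements has an eigenvalue in $\mathbb{F}_\ell$. *)

theory Defs
  imports "HOL-Analysis.Analysis"
begin

definition bilin :: "'a::field ^'n ^'n \<Rightarrow> 'a ^'n \<Rightarrow> 'a ^'n \<Rightarrow> 'a" where
  "bilin J x y = (\<Sum>i\<in>UNIV. x $ i * (J *v y) $ i)"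

definition alternating_form :: "'a::field ^'n ^'n \<Rightarrow> bool" where
  "alternating_form J \<longleftrightarrow> (\<forall>x. bilin J x x = 0)"

definition nondegenerate_form :: "'a::field ^'n ^'n \<Rightarrow> bool" where
  "nondegenerate_form J \<longleftrightarrow> (\<forall>x. (\<forall>y. bilin J x y = 0) \<longrightarrow> x = 0)"

definition Sp :: "'a::field ^'n ^'n \<Rightarrow> ('a ^'n ^'n) set" where
  "Sp J = {g. invertible g \<and> (\<forall>x y. bilin J (g *v x) (g *v y) = bilin J x y)}"

definition matrix_subgroup :: "('a::field ^'n ^'n) set \<Rightarrow> bool" where
  "matrix_subgroup G \<longleftrightarrow> mat 1 \<in> G \<and> (\<forall>g\<in>G. \<forall>h\<in>G. g ** h \<in> G)
     \<and> (\<forall>g\<in>G. invertible g \<and> matrix_inv g \<in> G)"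

definition is_subspace :: "('a::field ^'n) set \<Rightarrow> bool" where
  "is_subspace W \<longleftrightarrow> 0 \<in> W \<and> (\<forall>v\<in>W. \<forall>w\<in>W. v + w \<in> W) \<and> (\<forall>c. \<forall>v\<in>W. c *s v \<in> W)"

definition acts_irreducibly :: "('a::field ^'n ^'n) set \<Rightarrow> bool" where
  "acts_irreducibly G \<longleftrightarrow>
     (\<forall>W. is_subspace W \<and> (\<forall>g\<in>G. \<forall>w\<in>W. g *v w \<in> W) \<longrightarrow> W = {0} \<or> W = UNIV)"

definition has_eigenvalue_in_field :: "'a::field ^'n ^'n \<Rightarrow> bool" where
  "has_eigenvalue_in_field g \<longleftrightarrow> (\<exists>c v. v \<noteq> 0 \<and> g *v v = c *s v)"

definition Hasse :: "('a::field ^'n ^'n) set \<Rightarrow> bool" where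
  "Hasse G \<longleftrightarrow> matrix_subgroup G \<and> acts_irreducibly G \<and> (\<forall>g\<in>G. has_eigenvalue_in_field g)"

definition center :: "('a::field ^'n ^'n) set \<Rightarrow> ('a ^'n ^'n) set" where
  "center G = {z\<in>G. \<forall>g\<in>G. z ** g = g ** z}"

end

theory Submission
  imports Defs
begin

lemma mv_smult: "(A::'a::field^'n^'m) *v (c *s x) = c *s (A *v x)"
  by (simp add: vec_eq_iff matrix_vector_mult_def sum_distrib_left algebra_simps)

lemma bilin_smult: "bilin J (c *s x) (c *s y) = c * c * bilin (J::'a::field^'n^'n) x y"
  by (simp add: bilin_def mv_smult sum_distrib_left algebra_simps)

lemma mv_neg: "(- (A::'a::field^'n^'m)) *v x = - (A *v x)"
  by (simp add: vec_eq_iff matrix_vector_mult_def sum_negf)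

theorem lemmaA4:
  fixes J :: "'a::{field,finite} ^4 ^4"
    and G :: "('a ^4 ^4) set"
  assumes "prime CARD('a)"
    and "alternating_form J" and "nondegenerate_form J"
    and "G \<subseteq> Sp J"
    and "Hasse G"
  shows "center G \<subseteq> {mat 1, - mat 1}"
proof
  fix z assume "z \<in> center G"
  hence zG: "z \<in> G" and comm: "\<And>g. g \<in> G \<Longrightarrow> z ** g = g ** z" by (auto simp: center_def)
  from assms(5) zG obtain c v where v: "v \<noteq> 0" "z *v v = c *s v"
    by (auto simp: Hasse_def has_eigenvalue_in_field_def)
  define W where "W = {w. z *v w = c *s w}"
  have sub: "is_subspace W"
    unfolding is_subspace_def W_def
    by (auto simp: matrix_vector_right_distrib mv_smult vector_ssub_ldistrib algebra_simps)
  have inv: "\<forall>g\<in>G. \<forall>w\<in>W. g *v w \<in> W"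
  proof (intro ballI)
    fix g w assume g: "g \<in> G" and w: "w \<in> W"
    have "z *v (g *v w) = (z ** g) *v w" by (simp add: matrix_vector_mul_assoc)
    also have "\<dots> = (g ** z) *v w" using comm g by simp
    also have "\<dots> = g *v (c *s w)" using w by (simp add: W_def matrix_vector_mul_assoc[symmetric])
    also have "\<dots> = c *s (g *v w)" by (simp add: mv_smult)
    finally show "g *v w \<in> W" by (simp add: W_def)
  qed
  have "W \<noteq> {0}" using v by (auto simp: W_def)
  hence "W = UNIV" using sub inv assms(5) by (auto simp: Hasse_def acts_irreducibly_def)
  hence zw: "\<And>w. z *v w = c *s w" by (auto simp: W_def)
  have "z \<in> Sp J" using zG assms(4) by auto
  hence pres: "\<And>x y. bilin J (z *v x) (z *v y) = bilin J x y" by (auto simp: Sp_def)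
  have e: "(1::'a^4) \<noteq> 0" by (simp add: vec_eq_iff)
  with assms(3) obtain y where y: "bilin J 1 y \<noteq> 0" unfolding nondegenerate_form_def by blast
  have "c * c * bilin J 1 y = bilin J 1 y" using pres[of 1 y] by (simp add: zw bilin_smult)
  hence "c * c = 1" using y by simp
  hence "(c - 1) * (c + 1) = 0" by (simp add: algebra_simps)
  hence "c = 1 \<or> c = -1" by (auto simp: eq_neg_iff_add_eq_0)
  thus "z \<in> {mat 1, - mat 1}"
  proof
    assume "c = 1" hence "z = mat 1" using zw by (intro matrix_eq[THEN iffD2]) simp
    thus ?thesis by simp
  next
    assume "c = -1" hence "z = - mat 1" using zw
      by (intro matrix_eq[THEN iffD2]) (simp add: mv_neg)
    thus ?thesis by simp
  qed
qed

end
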